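(* $M^L(5)=8$.
   Context: $\mathbb{F}=\{0,1\}$. The binary $n$-dimensional hypercube $\mathbb{F}^n$ is the graph on $\mathbb{F}^n$ where two words are adjacent iff their Hamming distance is $1$. For a nonempty $C\subseteq\mathbb{F}^n$, $I(\mathbf{x})=N[\mathbf{x}]\cap C$ with $N[\mathbf{x}]$ the words at Hamming distance $\le1$ from $\mathbf{x}$. $C$ is a local identifying code if $I(\mathbf{x})\ne\emptyset$ for all $\mathbf{x}$ and $I(\mathbf{x})\ne I(\mathbf{y})$ for all adjacent $\mathbf{x},\mathbf{y}$. $M^L(n)$ is the minimum cardinality of a local identifying code in $\mathbb{F}^n$. *)

theory Defs
  imports Main
begin

definition words :: "nat \<Rightarrow> bool list set" where
  "words n = {x. length x = n}"

definition hamming :: "bool list \<Rightarrow> bool list \<Rightarrow> nat" where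
  "hamming x y = card {i. i < length x \<and> x ! i \<noteq> y ! i}"

definition closed_nbhd :: "nat \<Rightarrow> bool list \<Rightarrow> bool list set" where
  "closed_nbhd n x = {y \<in> words n. hamming x y \<le> 1}"

definition I_set :: "nat \<Rightarrow> bool list set \<Rightarrow> bool list \<Rightarrow> bool list set" where
  "I_set n C x = closed_nbhd n x \<inter> C"

definition local_identifying_code :: "nat \<Rightarrow> bool list set \<Rightarrow> bool" where
  "local_identifying_code n C \<longleftrightarrow>
     C \<subseteq> words n \<and> C \<noteq> {} \<and>
     (\<forall>x \<in> words n. I_set n C x \<noteq> {}) \<and>
     (\<forall>x \<in> words n. \<forall>y \<in> words n. hamming x y = 1 \<longrightarrow> I_set n C x \<noteq> I_set n C y)"

definition M_L :: "nat \<Rightarrow> nat" where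
  "M_L n = (LEAST k. \<exists>C. local_identifying_code n C \<and> card C = k)"

end

theory Submission
  imports Defs
begin

definition flip :: "bool list \<Rightarrow> nat \<Rightarrow> bool list" where
  "flip x i = x[i := \<not> x ! i]"

definition nbs :: "bool list \<Rightarrow> bool list set" where
  "nbs x = flip x ` {..<length x}"

definition ev :: "bool list \<Rightarrow> bool" where
  "ev x = even (length (filter id x))"

lemma length_flip[simp]: "length (flip x i) = length x"
  by (simp add: flip_def)

lemma words_finite: "finite (words n)"
proof -
  have "words n = set (List.n_lists n [True, False])"
    by (auto simp: words_def set_n_lists)
  thus ?thesis by simp
qed

lemma words5: "words 5 = set (List.n_lists 5 [True, False])"
  by (auto simp: words_def set_n_lists)

lemma nbs_length: "y \<in> nbs x \<Longrightarrow> length y = length x"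
  by (auto simp: nbs_def)

lemma not_in_nbs: "x \<notin> nbs x"
proof
  assume "x \<in> nbs x"
  then obtain i where "i < length x" "x = flip x i" by (auto simp: nbs_def)
  hence "x ! i = (\<not> x ! i)" by (metis flip_def nth_list_update_eq)
  thus False by simp
qed

lemma nbs_sym: "y \<in> nbs x \<Longrightarrow> x \<in> nbs y"
proof -
  assume "y \<in> nbs x"
  then obtain i where i: "i < length x" "y = flip x i" by (auto simp: nbs_def)
  have f: "flip y i = x" using i by (simp add: flip_def)
  have "i \<in> {..<length y}" using i by simp
  hence "flip y i \<in> flip y ` {..<length y}" by (rule imageI)
  thus ?thesis unfolding nbs_def f .
qed

lemma card_nbs: "card (nbs x) = length x"
proof -
  have "inj_on (flip x) {..<length x}"
  proof (rule inj_onI)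
    fix i j assume ij: "i \<in> {..<length x}" "j \<in> {..<length x}" "flip x i = flip x j"
    show "i = j"
    proof (rule ccontr)
      assume "i \<noteq> j"
      hence "flip x j ! i = x ! i" by (simp add: flip_def)
      moreover have "flip x i ! i = (\<not> x ! i)" using ij(1) by (simp add: flip_def)
      moreover have "flip x i ! i = flip x j ! i" using ij(3) by simp
      ultimately show False by simp
    qed
  qed
  thus ?thesis by (simp add: nbs_def card_image)
qed

lemma filter_upd: "i < length x \<Longrightarrow>
  length (filter id (x[i := \<not> x ! i])) + (if x ! i then 1 else 0) =
  length (filter id x) + (if x ! i then 0 else 1)"
proof (induction x arbitrary: i)
  case Nil thus ?case by simp
next
  case (Cons a x)
  show ?case
  proof (cases i)
    case 0 thus ?thesis by simp
  next
    case (Suc j) thus ?thesis using Cons.IH[of j] Cons.prems by (cases "x ! j") simp_all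
  qed
qed

lemma ev_nbs: "y \<in> nbs x \<Longrightarrow> ev y = (\<not> ev x)"
proof -
  assume "y \<in> nbs x"
  then obtain i where i: "i < length x" "y = flip x i" by (auto simp: nbs_def)
  have h: "length (filter id (x[i := \<not> x ! i])) + (if x ! i then 1 else 0) =
  length (filter id x) + (if x ! i then 0 else 1)" by (rule filter_upd[OF i(1)])
  show ?thesis
  proof (cases "x ! i")
    case True
    hence "length (filter id (x[i := \<not> x ! i])) + 1 = length (filter id x)" using h by simp
    thus ?thesis unfolding ev_def i(2) flip_def by (metis Suc_eq_plus1 even_Suc)
  next
    case False
    hence "length (filter id (x[i := \<not> x ! i])) = length (filter id x) + 1" using h by simp
    thus ?thesis unfolding ev_def i(2) flip_def by (metis Suc_eq_plus1 even_Suc)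
  qed
qed

lemma hamming_le1:
  assumes "length y = length x"
  shows "hamming x y \<le> 1 \<longleftrightarrow> y = x \<or> y \<in> nbs x"
proof -
  define D where "D = {i. i < length x \<and> x ! i \<noteq> y ! i}"
  have fD: "finite D" by (simp add: D_def)
  have h: "hamming x y = card D" by (simp add: hamming_def D_def)
  have D0: "D = {} \<longleftrightarrow> y = x"
  proof
    assume "D = {}" thus "y = x" using assms
      by (intro nth_equalityI) (auto simp: D_def)
  qed (auto simp: D_def)
  have D1: "(\<exists>i. D = {i}) \<longleftrightarrow> y \<in> nbs x"
  proof
    assume "\<exists>i. D = {i}"
    then obtain i where i: "D = {i}" by blast
    hence il: "i < length x" "x ! i \<noteq> y ! i" by (auto simp: D_def)
    have "y = flip x i"
    proof (rule nth_equalityI)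
      show "length y = length (flip x i)" using assms by simp
      fix j assume "j < length y"
      thus "y ! j = flip x i ! j"
        using i il assms by (cases "j = i") (auto simp: flip_def D_def)
    qed
    thus "y \<in> nbs x" using il by (auto simp: nbs_def)
  next
    assume "y \<in> nbs x"
    then obtain i where i: "i < length x" "y = flip x i" by (auto simp: nbs_def)
    have "D = {i}" using i by (auto simp: D_def flip_def nth_list_update)
    thus "\<exists>i. D = {i}" by blast
  qed
  have "card D \<le> 1 \<longleftrightarrow> D = {} \<or> (\<exists>i. D = {i})"
    using fD by (metis card_0_eq card_1_singleton_iff le_Suc_eq le_zero_eq One_nat_def card.empty is_singletonI is_singleton_altdef)
  thus ?thesis using h D0 D1 by auto
qed

lemma hamming_eq1:
  assumes "length y = length x"
  shows "hamming x y = 1 \<longleftrightarrow> y \<in> nbs x"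
proof -
  have "hamming x y = 0 \<longleftrightarrow> y = x"
    using assms by (auto simp: hamming_def intro: nth_equalityI)
  moreover have "hamming x y = 1 \<longleftrightarrow> hamming x y \<le> 1 \<and> hamming x y \<noteq> 0" by auto
  ultimately show ?thesis using hamming_le1[OF assms] not_in_nbs by auto
qed

lemma closed_nbhd_eq: "x \<in> words n \<Longrightarrow> closed_nbhd n x = insert x (nbs x)"
  unfolding closed_nbhd_def words_def
  using hamming_le1 nbs_length by auto


lemma lic_facts:
  assumes L: "local_identifying_code 5 C"
  shows "C \<subseteq> words 5"
    and F1: "\<And>x. x \<in> words 5 \<Longrightarrow> nbs x \<inter> C = {} \<Longrightarrow> x \<in> C"
    and F2: "\<And>x y. x \<in> words 5 \<Longrightarrow> nbs x \<inter> C = {} \<Longrightarrow> y \<in> nbs x \<Longrightarrow> 2 \<le> card (nbs y \<inter> C)"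
proof -
  show CV: "C \<subseteq> words 5" using L by (simp add: local_identifying_code_def)
  show 1: "x \<in> C" if "x \<in> words 5" "nbs x \<inter> C = {}" for x
  proof -
    have "I_set 5 C x \<noteq> {}" using L that(1) by (simp add: local_identifying_code_def)
    thus ?thesis using that by (auto simp: I_set_def closed_nbhd_eq)
  qed
  show "2 \<le> card (nbs y \<inter> C)" if xw: "x \<in> words 5" and e: "nbs x \<inter> C = {}" and y: "y \<in> nbs x" for x y
  proof (rule ccontr)
    assume "\<not> 2 \<le> card (nbs y \<inter> C)"
    hence c1: "card (nbs y \<inter> C) \<le> 1" by simp
    have xC: "x \<in> C" using 1 xw e by blast
    have xy: "x \<in> nbs y" using nbs_sym[OF y] .
    have yw: "y \<in> words 5" using y xw nbs_length by (auto simp: words_def)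
    have fin: "finite (nbs y \<inter> C)" by (simp add: nbs_def)
    have "nbs y \<inter> C = {x}"
    proof -
      have "x \<in> nbs y \<inter> C" using xy xC by simp
      thus ?thesis using c1 fin card_le_Suc0_iff_eq by fastforce
    qed
    moreover have "y \<notin> C" using e y by blast
    ultimately have "insert y (nbs y) \<inter> C = {x}" by blast
    moreover have "insert x (nbs x) \<inter> C = {x}" using e xC by blast
    ultimately have "I_set 5 C x = I_set 5 C y"
      using xw yw unfolding I_set_def closed_nbhd_eq[OF xw] closed_nbhd_eq[OF yw] by simp
    moreover have "hamming x y = 1" using hamming_eq1[OF nbs_length[OF y]] y by simp
    ultimately show False using L xw yw by (auto simp: local_identifying_code_def)
  qed
qed


lemma nbs_words: "x \<in> words n \<Longrightarrow> y \<in> nbs x \<Longrightarrow> y \<in> words n"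
  using nbs_length by (auto simp: words_def)

lemma count_class:
  assumes CV: "C \<subseteq> words 5"
  shows "(\<Sum>x\<in>{x\<in>words 5. ev x = b}. card (nbs x \<inter> C)) = 5 * card {c\<in>C. ev c \<noteq> b}"
proof -
  let ?E = "{x\<in>words 5. ev x = b}"
  have fC: "finite C" using CV words_finite finite_subset by blast
  have fE: "finite ?E" using words_finite by simp
  have "(\<Sum>x\<in>?E. card (nbs x \<inter> C)) = (\<Sum>x\<in>?E. \<Sum>c\<in>C. (of_bool (c \<in> nbs x) :: nat))"
    using fC by (simp add: Int_commute Collect_mem_eq)
  also have "\<dots> = (\<Sum>c\<in>C. \<Sum>x\<in>?E. (of_bool (c \<in> nbs x) :: nat))"
    by (rule sum.swap)
  also have "\<dots> = (\<Sum>c\<in>C. 5 * (of_bool (ev c \<noteq> b) :: nat))"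
  proof (rule sum.cong[OF refl])
    fix c assume cC: "c \<in> C"
    hence cw: "c \<in> words 5" using CV by blast
    have "?E \<inter> {x. c \<in> nbs x} = {x \<in> nbs c. (\<not> ev c) = b}"
    proof (rule set_eqI)
      fix x
      show "x \<in> ?E \<inter> {x. c \<in> nbs x} \<longleftrightarrow> x \<in> {x \<in> nbs c. (\<not> ev c) = b}"
        using nbs_sym[of c x] nbs_sym[of x c] ev_nbs[of x c] nbs_words[OF cw, of x] by auto
    qed
    also have "\<dots> = (if ev c \<noteq> b then nbs c else {})" by auto
    moreover have "card (nbs c) = 5" using cw by (simp add: card_nbs words_def)
    ultimately show "(\<Sum>x\<in>?E. (of_bool (c \<in> nbs x) :: nat)) = 5 * of_bool (ev c \<noteq> b)"
      using fE by simp
  qed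
  also have "\<dots> = 5 * card {c\<in>C. ev c \<noteq> b}"
    using fC by (simp add: sum_distrib_left[symmetric] Int_def conj_commute)
  finally show ?thesis .
qed

lemma sum_ineq:
  fixes s :: "'a \<Rightarrow> nat"
  assumes "finite E"
  shows "card E + card {x\<in>E. 2 \<le> s x} \<le> (\<Sum>x\<in>E. s x) + card {x\<in>E. s x = 0}"
proof -
  have "(\<Sum>x\<in>E. (1::nat) + of_bool (2 \<le> s x)) \<le> (\<Sum>x\<in>E. s x + of_bool (s x = 0))"
    by (rule sum_mono) auto
  moreover have "(\<Sum>x\<in>E. s x + of_bool (s x = 0)) = (\<Sum>x\<in>E. s x) + card {x\<in>E. s x = 0}"
    by (subst sum.distrib) (simp add: assms Int_def)
  moreover have "(\<Sum>x\<in>E. (1::nat) + of_bool (2 \<le> s x)) = card E + card {x\<in>E. 2 \<le> s x}"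
    by (subst sum.distrib) (simp add: assms Int_def)
  ultimately show ?thesis by simp
qed

lemma class_card: "card {x\<in>words 5. ev x = b} = 16"
proof -
  have "{x\<in>words 5. ev x = b} = set (filter (\<lambda>x. ev x = b) (List.n_lists 5 [True,False]))"
    by (simp add: words5)
  moreover have "card (set (filter (\<lambda>x. ev x = True) (List.n_lists 5 [True,False]))) = 16"
    apply (simp add: numeral_eq_Suc ev_def even_Suc)
    apply presburger done
  moreover have "card (set (filter (\<lambda>x. ev x = False) (List.n_lists 5 [True,False]))) = 16"
    apply (simp add: numeral_eq_Suc ev_def even_Suc)
    apply presburger done
  ultimately show ?thesis by (cases b) simp_all
qed


lemma arith_final:
  fixes p q aT aF tT tF :: nat
  assumes "16 + tT \<le> 5 * q + aT" "aT \<le> p" "aF \<noteq> 0 \<Longrightarrow> 5 \<le> tT"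
    and "16 + tF \<le> 5 * p + aF" "aF \<le> q" "aT \<noteq> 0 \<Longrightarrow> 5 \<le> tF"
  shows "8 \<le> p + q"
  using assms by (cases "aT = 0"; cases "aF = 0"; presburger)

lemma lower:
  assumes L: "local_identifying_code 5 C"
  shows "8 \<le> card C"
proof -
  define s where "s x = card (nbs x \<inter> C)" for x
  define E where "E b = {x\<in>words 5. ev x = b}" for b
  have CV: "C \<subseteq> words 5" using lic_facts(1)[OF L] .
  have fC: "finite C" using CV words_finite finite_subset by blast
  have fE: "finite (E b)" for b using words_finite by (simp add: E_def)
  have key: "card (E b) + card {x\<in>E b. 2 \<le> s x} \<le> 5 * card {c\<in>C. ev c \<noteq> b} + card {x\<in>E b. s x = 0}" for b
    using sum_ineq[OF fE, of b s] count_class[OF CV, of b] by (simp add: s_def E_def)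
  have cE: "card (E b) = 16" for b using class_card by (simp add: E_def)
  have Zsub: "card {x\<in>E b. s x = 0} \<le> card {c\<in>C. ev c = b}" for b
  proof (rule card_mono)
    show "finite {c\<in>C. ev c = b}" using fC by simp
    show "{x\<in>E b. s x = 0} \<subseteq> {c\<in>C. ev c = b}"
    proof
      fix x assume x: "x \<in> {x\<in>E b. s x = 0}"
      hence xw: "x \<in> words 5" and xe: "ev x = b" by (auto simp: E_def)
      have "finite (nbs x \<inter> C)" using fC by simp
      hence "nbs x \<inter> C = {}" using x by (simp add: s_def)
      hence "x \<in> C" using lic_facts(2)[OF L xw] by blast
      thus "x \<in> {c\<in>C. ev c = b}" using xe by simp
    qed
  qed
  have Tbig: "5 \<le> card {x\<in>E b. 2 \<le> s x}" if "card {x\<in>E (\<not> b). s x = 0} \<noteq> 0" for b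
  proof -
    obtain z where z: "z \<in> E (\<not> b)" "s z = 0" using \<open>card _ \<noteq> 0\<close> card.empty by (metis (mono_tags, lifting) empty_Collect_eq)
    hence zw: "z \<in> words 5" and ze: "ev z = (\<not> b)" by (auto simp: E_def)
    have "finite (nbs z \<inter> C)" using fC by simp
    hence zC: "nbs z \<inter> C = {}" using z by (simp add: s_def)
    have "nbs z \<subseteq> {x\<in>E b. 2 \<le> s x}"
    proof
      fix y assume y: "y \<in> nbs z"
      have "y \<in> words 5" using nbs_words[OF zw y] .
      moreover have "ev y = b" using ev_nbs[OF y] ze by simp
      moreover have "2 \<le> s y" using lic_facts(3)[OF L zw zC y] by (simp add: s_def)
      ultimately show "y \<in> {x\<in>E b. 2 \<le> s x}" by (simp add: E_def)
    qed
    moreover have "card (nbs z) = 5" using zw by (simp add: card_nbs words_def)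
    moreover have "finite {x\<in>E b. 2 \<le> s x}" using fE by simp
    ultimately show ?thesis by (metis card_mono)
  qed
  have split: "card C = card {c\<in>C. ev c} + card {c\<in>C. \<not> ev c}"
  proof -
    have "C = {c\<in>C. ev c} \<union> {c\<in>C. \<not> ev c}" by blast
    hence "card C = card ({c\<in>C. ev c} \<union> {c\<in>C. \<not> ev c})" by simp
    also have "\<dots> = card {c\<in>C. ev c} + card {c\<in>C. \<not> ev c}"
      by (rule card_Un_disjoint) (use fC in auto)
    finally show ?thesis .
  qed
  have k1: "16 + card {x\<in>E True. 2 \<le> s x} \<le> 5 * card {c\<in>C. \<not> ev c} + card {x\<in>E True. s x = 0}"
    using key[of True] cE[of True] by simp
  have k2: "16 + card {x\<in>E False. 2 \<le> s x} \<le> 5 * card {c\<in>C. ev c} + card {x\<in>E False. s x = 0}"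
    using key[of False] cE[of False] by simp
  have z1: "card {x\<in>E True. s x = 0} \<le> card {c\<in>C. ev c}" using Zsub[of True] by simp
  have z2: "card {x\<in>E False. s x = 0} \<le> card {c\<in>C. \<not> ev c}" using Zsub[of False] by simp
  have t1: "card {x\<in>E False. s x = 0} \<noteq> 0 \<Longrightarrow> 5 \<le> card {x\<in>E True. 2 \<le> s x}"
    using Tbig[of True] by simp
  have t2: "card {x\<in>E True. s x = 0} \<noteq> 0 \<Longrightarrow> 5 \<le> card {x\<in>E False. 2 \<le> s x}"
    using Tbig[of False] by simp
  show ?thesis using arith_final[OF k1 z1 t1 k2 z2 t2] split by simp
qed


definition C0l :: "bool list list" where "C0l = [[False, False, False, False, False], [True, False, False, False, False], [False, True, False, False, False], [True, True, False, False, False], [False, False, True, True, True], [True, False, True, True, True], [False, True, True, True, True], [True, True, True, True, True]]"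

definition nbl :: "bool list \<Rightarrow> bool list list" where "nbl x = map (flip x) [0,1,2,3,4]"

lemma nbs_nbl: "x \<in> words 5 \<Longrightarrow> nbs x = set (nbl x)"
proof -
  assume "x \<in> words 5"
  hence "length x = 5" by (simp add: words_def)
  moreover have "{..<5::nat} = {0,1,2,3,4}" by auto
  ultimately show ?thesis by (simp add: nbs_def nbl_def)
qed

lemma dom_check: "\<forall>x\<in>set (List.n_lists 5 [True,False]). \<exists>c\<in>set C0l. c = x \<or> c \<in> set (nbl x)"
  by (simp add: numeral_eq_Suc C0l_def nbl_def flip_def)

lemma sep_check: "\<forall>x\<in>set (List.n_lists 5 [True,False]). \<forall>y \<in> set (nbl x). \<exists>c\<in>set C0l. (c = x \<or> c \<in> set (nbl x)) \<noteq> (c = y \<or> c \<in> set (nbl y))"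
  by (simp add: numeral_eq_Suc C0l_def nbl_def flip_def)

lemma upper: "local_identifying_code 5 (set C0l)"
  unfolding local_identifying_code_def
proof (intro conjI ballI impI)
  show "set C0l \<subseteq> words 5" by (simp add: C0l_def words_def)
  show "set C0l \<noteq> {}" by (simp add: C0l_def)
next
  fix x assume xw: "x \<in> words 5"
  hence "x \<in> set (List.n_lists 5 [True,False])" by (simp add: words5)
  then obtain c where "c \<in> set C0l" "c = x \<or> c \<in> set (nbl x)" using dom_check by blast
  thus "I_set 5 (set C0l) x \<noteq> {}"
    unfolding I_set_def closed_nbhd_eq[OF xw] nbs_nbl[OF xw] by blast
next
  fix x y assume xw: "x \<in> words 5" and yw: "y \<in> words 5" and h: "hamming x y = 1"
  have "y \<in> nbs x" using h hamming_eq1 xw yw by (simp add: words_def)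
  hence y: "y \<in> set (nbl x)" using nbs_nbl[OF xw] by simp
  have "x \<in> set (List.n_lists 5 [True,False])" using xw by (simp add: words5)
  then obtain c where c: "c \<in> set C0l" "(c = x \<or> c \<in> set (nbl x)) \<noteq> (c = y \<or> c \<in> set (nbl y))"
    using sep_check y by blast
  show "I_set 5 (set C0l) x \<noteq> I_set 5 (set C0l) y"
  proof
    assume eq: "I_set 5 (set C0l) x = I_set 5 (set C0l) y"
    have "c \<in> I_set 5 (set C0l) x \<longleftrightarrow> c \<in> I_set 5 (set C0l) y" using eq by simp
    thus False using c
      unfolding I_set_def closed_nbhd_eq[OF xw] closed_nbhd_eq[OF yw] nbs_nbl[OF xw] nbs_nbl[OF yw]
      by auto
  qed
qed

lemma card_C0: "card (set C0l) = 8"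
  by (simp add: C0l_def)

theorem mainTheorem11:
  shows "M_L 5 = 8"
  unfolding M_L_def
proof (rule Least_equality)
  show "\<exists>C. local_identifying_code 5 C \<and> card C = 8" using upper card_C0 by blast
next
  fix k assume "\<exists>C. local_identifying_code 5 C \<and> card C = k"
  thus "8 \<le> k" using lower by blast
qed

end
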